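(* Let $p\ge1$ be an integer, $x_1,\dots,x_p\in\mathbb{R}_{\ge0}$, $\epsilon\in(0,1]$, and $\delta>0$ with $\delta\le\frac{\min_{i\in[p]}x_i}{4\epsilon^{-1}\log(2p\epsilon^{-1})}$. Let $x'_1,\dots,x'_p\in\mathbb{R}_{\ge0}$ satisfy $x_i\le x'_i\le x_i+\delta$ for all $i\in[p]$. Then $\mathrm{TV}\big(\mathrm{softargmin}^\epsilon_{i\in[p]}x_i,\ \mathrm{softargmin}^\epsilon_{i\in[p]}x'_i\big)\le\frac{10\epsilon^{-1}\log(2p\epsilon^{-1})\delta}{\min_{i\in[p]}x_i}$.
   Context: Softmin: if $\min_i x_i=0$, $\mathrm{softargmin}^\epsilon_{i\in[p]}x_i$ is an arbitrary index $i$ with $x_i=0$. Otherwise, sample $\bm c$ uniformly from $\big[\frac{2\epsilon^{-1}\log(2p\epsilon^{-1})}{\min_i x_i},\frac{4\epsilon^{-1}\log(2p\epsilon^{-1})}{\min_i x_i}\big]$, then sample $\bm i^*\in[p]$ with $\Pr[\bm i^*=i\mid\bm c]=\exp(-\bm c x_i)/\sum_{i'\in[p]}\exp(-\bm c x_{i'})$, and set $\mathrm{softargmin}^\epsilon_{i\in[p]}x_i=\bm i^*$ (the same procedure on $x'_1,\dots,x'_p$ defines $\mathrm{softargmin}^\epsilon_{i\in[p]}x'_i$). $\log$ is natural. $\mathrm{TV}(\bm X,\bm X')=\inf_{\mathcal D}\Pr_{(X,X')\sim\mathcal D}[X\neq X']$ over couplings $\mathcal D$. *)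

theory Defs
  imports "HOL-Probability.Probability"
begin

(* Indices [p] are represented as {0..<p}; points as x :: nat => real (only x 0 .. x (p-1) matter). *)

definition xmin :: "nat \<Rightarrow> (nat \<Rightarrow> real) \<Rightarrow> real" where
  "xmin p x = Min (x ` {..<p})"

definition softL :: "real \<Rightarrow> nat \<Rightarrow> real" where
  "softL eps p = (1 / eps) * ln (2 * real p * (1 / eps))"

(* probability that softargmin returns index i, in the case min x > 0:
   c uniform on [lo, hi], lo = 2 L / min x, hi = 4 L / min x, then
   Pr[i | c] = exp(-c x_i) / sum_j exp(-c x_j). *)
definition softw :: "real \<Rightarrow> nat \<Rightarrow> (nat \<Rightarrow> real) \<Rightarrow> nat \<Rightarrow> real" where
  "softw eps p x i =
     (let lo = 2 * softL eps p / xmin p x; hi = 4 * softL eps p / xmin p x in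
      if i < p then
        (1 / (hi - lo)) *
          (LBINT c=lo..hi. exp (- c * x i) / (\<Sum>j<p. exp (- c * x j)))
      else 0)"

(* The output distribution of softargmin^eps_{i in [p]} x_i.  If min x = 0 the
   output is some (fixed, arbitrary) index i with x_i = 0. *)
definition softargmin :: "real \<Rightarrow> nat \<Rightarrow> (nat \<Rightarrow> real) \<Rightarrow> nat pmf" where
  "softargmin eps p x =
     (if xmin p x = 0 then return_pmf (SOME i. i < p \<and> x i = 0)
      else embed_pmf (softw eps p x))"

definition TV :: "'a pmf \<Rightarrow> 'a pmf \<Rightarrow> real" where
  "TV P Q = Inf {measure_pmf.prob D {z. fst z \<noteq> snd z} | D.
                   map_pmf fst D = P \<and> map_pmf snd D = Q}"

end

theory Submission
  imports Defs "HOL-Analysis.Harmonic_Numbers"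
begin


lemma pmf_embed_finite:
  fixes f :: "'a \<Rightarrow> real"
  assumes "finite A" "\<And>x. 0 \<le> f x" "\<And>x. x \<notin> A \<Longrightarrow> f x = 0" "sum f A = 1"
  shows "pmf (embed_pmf f) = f"
proof -
  have "(\<integral>\<^sup>+x. ennreal (f x) \<partial>count_space UNIV) = (\<Sum>x\<in>A. ennreal (f x))"
    using assms by (intro nn_integral_count_space') auto
  also have "\<dots> = ennreal (sum f A)" using assms by (simp add: sum_ennreal)
  finally have "(\<integral>\<^sup>+x. ennreal (f x) \<partial>count_space UNIV) = 1" using assms by simp
  then show ?thesis using assms(2) by (intro ext pmf_embed_pmf) auto
qed

lemma measure_pmf_finite_supp:
  assumes "finite B" "\<And>x. x \<notin> B \<Longrightarrow> pmf D x = 0"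
  shows "measure_pmf.prob D S = (\<Sum>z\<in>S\<inter>B. pmf D z)"
proof -
  have sub: "set_pmf D \<subseteq> B" using assms by (auto simp: set_pmf_eq)
  have "measure_pmf.prob D S = measure_pmf.prob D (S \<inter> set_pmf D)" by (simp add: measure_Int_set_pmf)
  also have "S \<inter> set_pmf D = (S \<inter> B) \<inter> set_pmf D" using sub by auto
  also have "measure_pmf.prob D \<dots> = measure_pmf.prob D (S \<inter> B)" by (simp add: measure_Int_set_pmf)
  also have "\<dots> = (\<Sum>z\<in>S\<inter>B. pmf D z)" using assms by (intro measure_measure_pmf_finite) auto
  finally show ?thesis .
qed

lemma TV_le:
  fixes P Q :: "'a pmf"
  assumes A: "finite A" and PA: "\<And>x. x \<notin> A \<Longrightarrow> pmf P x = 0" and QA: "\<And>x. x \<notin> A \<Longrightarrow> pmf Q x = 0"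
  shows "TV P Q \<le> (\<Sum>i\<in>A. \<bar>pmf P i - pmf Q i\<bar>) / 2"
proof -
  define f where "f = pmf P"
  define g where "g = pmf Q"
  define mn where "mn i = min (f i) (g i)" for i
  define s where "s = (\<Sum>i\<in>A. f i - mn i)"
  have f0: "\<And>i. 0 \<le> f i" "\<And>i. 0 \<le> g i" by (auto simp: f_def g_def)
  have sf: "sum f A = 1"
    using measure_pmf_finite_supp[OF A, of P UNIV] PA by (simp add: f_def)
  have sg: "sum g A = 1"
    using measure_pmf_finite_supp[OF A, of Q UNIV] QA by (simp add: g_def)
  have fo: "\<And>i. i \<notin> A \<Longrightarrow> f i = 0" "\<And>i. i \<notin> A \<Longrightarrow> g i = 0" using PA QA by (auto simp: f_def g_def)
  have s_g: "s = (\<Sum>i\<in>A. g i - mn i)"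
    unfolding s_def using sf sg by (simp add: sum_subtractf)
  have s_abs: "2 * s = (\<Sum>i\<in>A. \<bar>f i - g i\<bar>)"
  proof -
    have "2 * s = (\<Sum>i\<in>A. f i - mn i) + (\<Sum>i\<in>A. g i - mn i)"
      using s_def s_g by simp
    also have "\<dots> = (\<Sum>i\<in>A. (f i - mn i) + (g i - mn i))"
      by (rule sum.distrib[symmetric])
    also have "\<dots> = (\<Sum>i\<in>A. \<bar>f i - g i\<bar>)" by (intro sum.cong) (auto simp: mn_def)
    finally show ?thesis .
  qed
  have d0: "\<And>i. 0 \<le> f i - mn i" "\<And>i. 0 \<le> g i - mn i" by (auto simp: mn_def)
  have s0: "0 \<le> s" unfolding s_def using d0 by (simp add: sum_nonneg)
  have fz: "s = 0 \<Longrightarrow> i \<in> A \<Longrightarrow> f i - mn i = 0" for i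
    using sum_nonneg_eq_0_iff[OF A, of "\<lambda>i. f i - mn i"] d0 s_def by auto
  define h where "h z = (if fst z = snd z then mn (fst z) else 0) + (f (fst z) - mn (fst z)) * (g (snd z) - mn (snd z)) / s" for z
  have h0: "\<And>z. 0 \<le> h z" unfolding h_def using d0 s0 f0
    by (intro add_nonneg_nonneg divide_nonneg_nonneg mult_nonneg_nonneg) (auto simp: mn_def)
  have hout: "z \<notin> A \<times> A \<Longrightarrow> h z = 0" for z
    using fo by (cases z) (auto simp: h_def mn_def)
  have rowsum: "(\<Sum>j\<in>A. h (i, j)) = f i" if "i \<in> A" for i
  proof -
    have "(\<Sum>j\<in>A. h (i, j)) = (\<Sum>j\<in>A. (if i = j then mn i else 0)) + (\<Sum>j\<in>A. (f i - mn i) * (g j - mn j) / s)"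
      by (simp add: h_def sum.distrib cong: if_cong)
    also have "(\<Sum>j\<in>A. (if i = j then mn i else 0)) = mn i" using that A by simp
    also have "(\<Sum>j\<in>A. (f i - mn i) * (g j - mn j) / s) = (f i - mn i) * s / s"
      by (simp add: s_g sum_divide_distrib[symmetric] sum_distrib_left[symmetric])
    also have "mn i + (f i - mn i) * s / s = f i" using fz[OF _ that] by (cases "s = 0") auto
    finally show ?thesis .
  qed
  have hsum: "(\<Sum>z\<in>A\<times>A. h z) = 1"
  proof -
    have "(\<Sum>z\<in>A\<times>A. h z) = (\<Sum>i\<in>A. \<Sum>j\<in>A. h (i, j))" by (simp add: sum.cartesian_product)
    also have "\<dots> = (\<Sum>i\<in>A. f i)" using rowsum by simp
    finally show ?thesis using sf by simp
  qed
  define D where "D = embed_pmf h"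
  have pD: "pmf D = h" unfolding D_def using A h0 hout hsum by (intro pmf_embed_finite) auto
  have AA: "finite (A \<times> A)" using A by simp
  have m1: "map_pmf fst D = P"
  proof (rule pmf_eqI)
    fix i
    have "pmf (map_pmf fst D) i = (\<Sum>z\<in>(fst -` {i}) \<inter> (A\<times>A). h z)"
      unfolding pmf_map using measure_pmf_finite_supp[OF AA, of D] pD hout by simp
    also have "\<dots> = (\<Sum>z\<in>A\<times>A. if fst z = i then h z else 0)"
      using AA by (subst sum.inter_filter[symmetric]) (auto intro!: sum.cong)
    also have "\<dots> = (\<Sum>a\<in>A. \<Sum>b\<in>A. if a = i then h (a, b) else 0)"
      by (subst sum.cartesian_product) (auto intro!: sum.cong)
    also have "\<dots> = f i"
    proof (cases "i \<in> A")
      case True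
      have "(\<Sum>a\<in>A. \<Sum>b\<in>A. if a = i then h (a, b) else 0) = (\<Sum>a\<in>A. if a = i then (\<Sum>b\<in>A. h (a, b)) else 0)"
        by (intro sum.cong) auto
      also have "\<dots> = (\<Sum>b\<in>A. h (i, b))" using A True by (simp add: sum.delta')
      finally show ?thesis using rowsum[OF True] by simp
    next
      case False then show ?thesis using fo by (auto intro!: sum.neutral)
    qed
    finally show "pmf (map_pmf fst D) i = pmf P i" by (simp add: f_def)
  qed
  have colsum: "(\<Sum>i\<in>A. h (i, j)) = g j" if "j \<in> A" for j
  proof -
    have "(\<Sum>i\<in>A. h (i, j)) = (\<Sum>i\<in>A. (if i = j then mn j else 0)) + (\<Sum>i\<in>A. (f i - mn i) * (g j - mn j) / s)"
      by (simp add: h_def sum.distrib cong: if_cong)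
    also have "(\<Sum>i\<in>A. (if i = j then mn j else 0)) = mn j" using that A by simp
    also have "(\<Sum>i\<in>A. (f i - mn i) * (g j - mn j) / s) = s * (g j - mn j) / s"
      by (simp add: s_def sum_divide_distrib[symmetric] sum_distrib_right[symmetric])
    also have "mn j + s * (g j - mn j) / s = g j"
    proof (cases "s = 0")
      case True
      have "g j - mn j = 0" using fz[OF True] s_g True sum_nonneg_eq_0_iff[OF A, of "\<lambda>i. g i - mn i"] d0 that by auto
      then show ?thesis using True by simp
    qed auto
    finally show ?thesis .
  qed
  have m2: "map_pmf snd D = Q"
  proof (rule pmf_eqI)
    fix j
    have "pmf (map_pmf snd D) j = (\<Sum>z\<in>(snd -` {j}) \<inter> (A\<times>A). h z)"
      unfolding pmf_map using measure_pmf_finite_supp[OF AA, of D] pD hout by simp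
    also have "\<dots> = (\<Sum>z\<in>A\<times>A. if snd z = j then h z else 0)"
      using AA by (subst sum.inter_filter[symmetric]) (auto intro!: sum.cong)
    also have "\<dots> = (\<Sum>a\<in>A. \<Sum>b\<in>A. if b = j then h (a, b) else 0)"
      by (subst sum.cartesian_product) (auto intro!: sum.cong)
    also have "\<dots> = (\<Sum>b\<in>A. \<Sum>a\<in>A. if b = j then h (a, b) else 0)"
      by (rule sum.swap)
    also have "\<dots> = g j"
    proof (cases "j \<in> A")
      case True
      have "(\<Sum>b\<in>A. \<Sum>a\<in>A. if b = j then h (a, b) else 0) = (\<Sum>b\<in>A. if b = j then (\<Sum>a\<in>A. h (a, b)) else 0)"
        by (intro sum.cong) auto
      also have "\<dots> = (\<Sum>a\<in>A. h (a, j))" using A True by (simp add: sum.delta')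
      finally show ?thesis using colsum[OF True] by simp
    next
      case False then show ?thesis using fo by (auto intro!: sum.neutral)
    qed
    finally show "pmf (map_pmf snd D) j = pmf Q j" by (simp add: g_def)
  qed
  have off: "measure_pmf.prob D {z. fst z \<noteq> snd z} \<le> s"
  proof -
    have "measure_pmf.prob D {z. fst z \<noteq> snd z} = (\<Sum>z\<in>{z. fst z \<noteq> snd z} \<inter> (A\<times>A). h z)"
      using measure_pmf_finite_supp[OF AA, of D] pD hout by simp
    also have "\<dots> = (\<Sum>z\<in>{z. fst z \<noteq> snd z} \<inter> (A\<times>A). (f (fst z) - mn (fst z)) * (g (snd z) - mn (snd z)) / s)"
      by (intro sum.cong) (auto simp: h_def)
    also have "\<dots> \<le> (\<Sum>z\<in>A\<times>A. (f (fst z) - mn (fst z)) * (g (snd z) - mn (snd z)) / s)"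
      using AA d0 s0 by (intro sum_mono2) (auto intro!: divide_nonneg_nonneg mult_nonneg_nonneg)
    also have "\<dots> = (\<Sum>a\<in>A. \<Sum>b\<in>A. (f a - mn a) * (g b - mn b) / s)"
      by (subst sum.cartesian_product) (auto intro!: sum.cong)
    also have "\<dots> = (\<Sum>a\<in>A. (f a - mn a) * (\<Sum>b\<in>A. g b - mn b) / s)"
      by (simp add: sum_distrib_left sum_divide_distrib)
    also have "\<dots> = (\<Sum>a\<in>A. (f a - mn a)) * s / s"
      by (simp add: s_g[symmetric] sum_distrib_right sum_divide_distrib)
    also have "\<dots> = s * s / s" by (simp add: s_def)
    also have "\<dots> \<le> s" by (cases "s = 0") auto
    finally show ?thesis .
  qed
  have "TV P Q \<le> measure_pmf.prob D {z. fst z \<noteq> snd z}"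
    unfolding TV_def
    by (rule cInf_lower) (use m1 m2 in \<open>auto intro!: bdd_belowI[of _ 0]\<close>)
  also have "\<dots> \<le> s" by (rule off)
  finally show ?thesis using s_abs by (simp add: f_def g_def)
qed



lemma softmax_diff:
  fixes x x' :: "nat \<Rightarrow> real" and c \<delta> :: real
  assumes p: "p \<ge> 1" and c: "c \<ge> 0" and xx: "\<forall>i<p. x i \<le> x' i \<and> x' i \<le> x i + \<delta>"
  shows "(\<Sum>i<p. \<bar>exp (- c * x i) / (\<Sum>j<p. exp (- c * x j)) - exp (- c * x' i) / (\<Sum>j<p. exp (- c * x' j))\<bar>) \<le> 2 * c * \<delta>"
proof -
  define a where "a i = exp (- c * x i)" for i
  define b where "b i = exp (- c * x' i)" for i
  define Z where "Z = (\<Sum>j<p. a j)"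
  define Z' where "Z' = (\<Sum>j<p. b j)"
  have ne: "{..<p} \<noteq> {}" using p by (auto simp: lessThan_empty_iff)
  have Zp: "Z > 0" unfolding Z_def a_def using ne by (intro sum_pos) auto
  have Zp': "Z' > 0" unfolding Z'_def b_def using ne by (intro sum_pos) auto
  have ba: "b i \<le> a i" if "i < p" for i
    unfolding a_def b_def using xx that c by (auto intro: mult_left_mono)
  have ab: "a i - b i \<le> a i * (c * \<delta>)" if "i < p" for i
  proof -
    have "- c * x' i \<ge> - c * x i + (- c * \<delta>)" using xx that c
      by (smt (verit, ccfv_SIG) distrib_left mult_left_mono mult_minus_left)
    hence "b i \<ge> a i * exp (- (c * \<delta>))" unfolding a_def b_def by (simp add: exp_add[symmetric])
    moreover have "exp (- (c * \<delta>)) \<ge> 1 - c * \<delta>" using exp_ge_add_one_self[of "- (c*\<delta>)"] by simp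
    moreover have "a i \<ge> 0" unfolding a_def by simp
    ultimately have "b i \<ge> a i * (1 - c * \<delta>)" by (smt (verit) mult_left_mono)
    thus ?thesis by (simp add: algebra_simps)
  qed
  have ZZ: "Z' \<le> Z" unfolding Z_def Z'_def using ba by (intro sum_mono) auto
  define d where "d i = a i / Z - b i / Z'" for i
  have sd: "(\<Sum>i<p. d i) = 0"
    unfolding d_def using Zp Zp' by (simp add: sum_subtractf sum_divide_distrib[symmetric] Z_def[symmetric] Z'_def[symmetric])
  have dm: "max (d i) 0 \<le> (a i - b i) / Z" if "i < p" for i
  proof -
    have "b i / Z \<le> b i / Z'" using ZZ Zp' by (intro divide_left_mono) (auto simp: b_def)
    hence "d i \<le> (a i - b i) / Z" unfolding d_def by (simp add: diff_divide_distrib)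
    moreover have "0 \<le> (a i - b i) / Z" using ba[OF that] Zp by simp
    ultimately show ?thesis by simp
  qed
  have "(\<Sum>i<p. \<bar>d i\<bar>) = (\<Sum>i<p. 2 * max (d i) 0 - d i)" by (intro sum.cong) auto
  also have "\<dots> = 2 * (\<Sum>i<p. max (d i) 0)" using sd by (simp add: sum_subtractf sum_distrib_left)
  also have "\<dots> \<le> 2 * (\<Sum>i<p. a i * (c * \<delta>) / Z)"
  proof -
    have "max (d i) 0 \<le> a i * (c * \<delta>) / Z" if "i < p" for i
      using dm[OF that] divide_right_mono[OF ab[OF that], of Z] Zp by linarith
    thus ?thesis by (intro mult_left_mono sum_mono) auto
  qed
  also have "(\<Sum>i<p. a i * (c * \<delta>) / Z) = c * \<delta>"
    using Zp by (simp add: sum_divide_distrib[symmetric] sum_distrib_right[symmetric] Z_def[symmetric])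
  finally show ?thesis by (simp add: d_def a_def b_def Z_def Z'_def)
qed

lemma int_sum1:
  fixes F :: "real \<Rightarrow> nat \<Rightarrow> real"
  assumes cont: "\<And>i. continuous_on UNIV (\<lambda>c. F c i)" and sum1: "\<And>c. (\<Sum>i<p. F c i) = 1" and "a \<le> b"
  shows "(\<Sum>i<p. integral {a..b} (\<lambda>c. F c i)) = b - a"
proof -
  have "(\<Sum>i<p. integral {a..b} (\<lambda>c. F c i)) = integral {a..b} (\<lambda>c. \<Sum>i<p. F c i)"
    by (rule integral_sum[symmetric]) (auto intro!: integrable_continuous_interval continuous_on_subset[OF cont])
  also have "\<dots> = b - a" using sum1 assms(3) by simp
  finally show ?thesis .
qed

lemma interval_part:
  fixes F :: "real \<Rightarrow> nat \<Rightarrow> real"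
  assumes cont: "\<And>i. continuous_on UNIV (\<lambda>c. F c i)"
    and nonneg: "\<And>c i. 0 \<le> F c i" and sum1: "\<And>c. (\<Sum>i<p. F c i) = 1"
    and ord: "lo' \<le> lo" "lo \<le> hi'" "hi' \<le> hi" "lo < hi" "lo' < hi'"
  shows "(\<Sum>i<p. \<bar>integral {lo..hi} (\<lambda>c. F c i) / (hi - lo) - integral {lo'..hi'} (\<lambda>c. F c i) / (hi' - lo')\<bar>)
     \<le> \<bar>1 / (hi - lo) - 1 / (hi' - lo')\<bar> * (hi' - lo) + (hi - hi') / (hi - lo) + (lo - lo') / (hi' - lo')"
proof -
  define I where "I a b i = integral {a..b} (\<lambda>c. F c i)" for a b i
  have intg: "(\<lambda>c. F c i) integrable_on {a..b}" for a b i
    by (auto intro!: integrable_continuous_interval continuous_on_subset[OF cont])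
  have I0: "0 \<le> I a b i" for a b i
    unfolding I_def by (rule Henstock_Kurzweil_Integration.integral_nonneg[OF intg]) (simp add: nonneg)
  have c1: "I lo hi i = I lo hi' i + I hi' hi i" for i
    unfolding I_def using Henstock_Kurzweil_Integration.integral_combine[of lo hi' hi "\<lambda>c. F c i", OF _ _ intg] ord by auto
  have c2: "I lo' hi' i = I lo' lo i + I lo hi' i" for i
    unfolding I_def using Henstock_Kurzweil_Integration.integral_combine[of lo' lo hi' "\<lambda>c. F c i", OF _ _ intg] ord by auto
  define w where "w = hi - lo"
  define w' where "w' = hi' - lo'"
  have wp: "w > 0" "w' > 0" using ord by (auto simp: w_def w'_def)
  have pt: "\<bar>I lo hi i / w - I lo' hi' i / w'\<bar> \<le> \<bar>1/w - 1/w'\<bar> * I lo hi' i + I hi' hi i / w + I lo' lo i / w'" for i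
  proof -
    have "I lo hi i / w - I lo' hi' i / w' = (1/w - 1/w') * I lo hi' i + I hi' hi i / w - I lo' lo i / w'"
      unfolding c1 c2 by (simp add: diff_divide_distrib add_divide_distrib algebra_simps)
    moreover have "\<bar>(1/w - 1/w') * I lo hi' i\<bar> = \<bar>1/w - 1/w'\<bar> * I lo hi' i" using I0 by (simp add: abs_mult)
    moreover have "0 \<le> I hi' hi i / w" "0 \<le> I lo' lo i / w'" using I0 wp by auto
    ultimately show ?thesis by linarith
  qed
  have "(\<Sum>i<p. \<bar>I lo hi i / w - I lo' hi' i / w'\<bar>) \<le> (\<Sum>i<p. \<bar>1/w - 1/w'\<bar> * I lo hi' i + I hi' hi i / w + I lo' lo i / w')"
    by (intro sum_mono pt)
  also have "\<dots> = \<bar>1/w - 1/w'\<bar> * (\<Sum>i<p. I lo hi' i) + (\<Sum>i<p. I hi' hi i) / w + (\<Sum>i<p. I lo' lo i) / w'"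
    by (simp add: sum.distrib sum_distrib_left sum_divide_distrib)
  also have "\<dots> = \<bar>1/w - 1/w'\<bar> * (hi' - lo) + (hi - hi') / w + (lo - lo') / w'"
    unfolding I_def using ord by (simp add: int_sum1[OF cont sum1])
  finally show ?thesis by (simp add: I_def w_def w'_def)
qed

lemma claim2:
  fixes F G :: "real \<Rightarrow> nat \<Rightarrow> real"
  assumes contF: "\<And>i. continuous_on UNIV (\<lambda>c. F c i)" and contG: "\<And>i. continuous_on UNIV (\<lambda>c. G c i)"
    and ab: "a \<le> b" and bd: "\<And>c. c \<in> {a..b} \<Longrightarrow> (\<Sum>i<p. \<bar>F c i - G c i\<bar>) \<le> K"
  shows "(\<Sum>i<p. \<bar>integral {a..b} (\<lambda>c. F c i) - integral {a..b} (\<lambda>c. G c i)\<bar>) \<le> K * (b - a)"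
proof -
  have intF: "(\<lambda>c. F c i) integrable_on {a..b}" for i
    by (auto intro!: integrable_continuous_interval continuous_on_subset[OF contF])
  have intG: "(\<lambda>c. G c i) integrable_on {a..b}" for i
    by (auto intro!: integrable_continuous_interval continuous_on_subset[OF contG])
  have intA: "(\<lambda>c. \<bar>F c i - G c i\<bar>) integrable_on {a..b}" for i
    by (auto intro!: integrable_continuous_interval continuous_intros continuous_on_subset[OF contF] continuous_on_subset[OF contG])
  have pt: "\<bar>integral {a..b} (\<lambda>c. F c i) - integral {a..b} (\<lambda>c. G c i)\<bar> \<le> integral {a..b} (\<lambda>c. \<bar>F c i - G c i\<bar>)" for i
  proof -
    have e: "integral {a..b} (\<lambda>c. F c i) - integral {a..b} (\<lambda>c. G c i) = integral {a..b} (\<lambda>c. F c i - G c i)"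
      by (rule integral_diff[symmetric, OF intF intG])
    have "integral {a..b} (\<lambda>c. F c i - G c i) \<le> integral {a..b} (\<lambda>c. \<bar>F c i - G c i\<bar>)"
      by (rule integral_le[OF integrable_diff[OF intF intG] intA]) auto
    moreover have "- integral {a..b} (\<lambda>c. F c i - G c i) \<le> integral {a..b} (\<lambda>c. \<bar>F c i - G c i\<bar>)"
      unfolding integral_neg[symmetric]
      by (rule integral_le[OF integrable_neg[OF integrable_diff[OF intF intG]] intA]) auto
    ultimately show ?thesis unfolding e by linarith
  qed
  have "(\<Sum>i<p. \<bar>integral {a..b} (\<lambda>c. F c i) - integral {a..b} (\<lambda>c. G c i)\<bar>) \<le> (\<Sum>i<p. integral {a..b} (\<lambda>c. \<bar>F c i - G c i\<bar>))"
    by (intro sum_mono pt)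
  also have "\<dots> = integral {a..b} (\<lambda>c. \<Sum>i<p. \<bar>F c i - G c i\<bar>)"
    by (rule integral_sum[symmetric]) (auto intro: intA)
  also have "\<dots> \<le> integral {a..b} (\<lambda>c. K)"
    by (rule integral_le) (auto intro!: integrable_sum intA bd)
  also have "\<dots> = K * (b - a)" using ab by simp
  finally show ?thesis .
qed


lemma arith_part:
  fixes L m m' \<delta> :: real
  assumes "L > 0" "0 < m" "m \<le> m'" "m' \<le> m + \<delta>" "m' \<le> 2 * m"
  shows "\<bar>1 / (4*L/m - 2*L/m) - 1 / (4*L/m' - 2*L/m')\<bar> * (4*L/m' - 2*L/m) + (4*L/m - 4*L/m') / (4*L/m - 2*L/m)
          + (2*L/m - 2*L/m') / (4*L/m' - 2*L/m') \<le> 4 * \<delta> / m"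
proof -
  have mp: "m' > 0" using assms by linarith
  have e1: "1 / (4*L/m - 2*L/m) = m / (2*L)" using assms by (simp add: field_simps)
  have e2: "1 / (4*L/m' - 2*L/m') = m' / (2*L)" using assms mp by (simp add: field_simps)
  have t1: "\<bar>m / (2*L) - m' / (2*L)\<bar> = (m' - m) / (2*L)" using assms by (simp add: field_simps)
  have h1: "4*L/m' - 2*L/m \<le> 2*L/m"
  proof -
    have "4*L/m' \<le> 4*L/m" using assms by (intro divide_left_mono) auto
    thus ?thesis by simp
  qed
  have T1: "(m' - m) / (2*L) * (4*L/m' - 2*L/m) \<le> (m' - m) / m"
  proof -
    have "(m' - m) / (2*L) * (4*L/m' - 2*L/m) \<le> (m' - m) / (2*L) * (2*L/m)"
      using h1 assms by (intro mult_left_mono) auto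
    also have "\<dots> = (m' - m) / m" using assms by (simp add: field_simps)
    finally show ?thesis .
  qed
  have T2: "(4*L/m - 4*L/m') / (4*L/m - 2*L/m) = 2 * (m' - m) / m'"
    using assms mp by (simp add: field_simps)
  have T2': "2 * (m' - m) / m' \<le> 2 * (m' - m) / m" using assms mp by (intro divide_left_mono) auto
  have T3: "(2*L/m - 2*L/m') / (4*L/m' - 2*L/m') = (m' - m) / m"
    using assms mp by (simp add: field_simps)
  have "(m' - m) / m + 2 * (m' - m) / m + (m' - m) / m = 4 * (m' - m) / m" by (simp add: field_simps)
  also have "\<dots> \<le> 4 * \<delta> / m" using assms by (intro divide_right_mono) auto
  finally have fin: "(m' - m) / m + 2 * (m' - m) / m + (m' - m) / m \<le> 4 * \<delta> / m" .
  show ?thesis unfolding e1 e2 t1 T2 T3 using T1 T2' fin by linarith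
qed

lemma aux_lin: "(0::real) \<le> q \<Longrightarrow> v \<le> 8 * q \<Longrightarrow> u \<le> 6 * q \<Longrightarrow> (u + v)/2 \<le> 10 * q"
  by (simp add: field_simps)

definition smx :: "nat \<Rightarrow> (nat \<Rightarrow> real) \<Rightarrow> real \<Rightarrow> nat \<Rightarrow> real" where
  "smx p y c i = exp (- c * y i) / (\<Sum>j<p. exp (- c * y j))"

lemma smx_props:
  assumes "p \<ge> 1"
  shows "continuous_on UNIV (\<lambda>c. smx p y c i)" "0 \<le> smx p y c i" "(\<Sum>i<p. smx p y c i) = 1"
proof -
  have ne: "{..<p} \<noteq> {}" using assms by (auto simp: lessThan_empty_iff)
  have pos: "(\<Sum>j<p. exp (- c * y j)) > 0" for c using ne by (intro sum_pos) auto
  show "continuous_on UNIV (\<lambda>c. smx p y c i)" unfolding smx_def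
    using pos by (intro continuous_intros) (auto simp: less_le)
  show "0 \<le> smx p y c i" unfolding smx_def using pos[of c] by simp
  show "(\<Sum>i<p. smx p y c i) = 1" unfolding smx_def using pos[of c]
    by (simp add: sum_divide_distrib[symmetric])
qed

lemma pmf_softargmin:
  assumes p: "p \<ge> 1" and m: "xmin p y > 0" and L: "softL eps p > 0"
  shows "pmf (softargmin eps p y) i =
    (if i < p then integral {2 * softL eps p / xmin p y..4 * softL eps p / xmin p y} (\<lambda>c. smx p y c i)
        / (4 * softL eps p / xmin p y - 2 * softL eps p / xmin p y) else 0)"
proof -
  define lo where "lo = 2 * softL eps p / xmin p y"
  define hi where "hi = 4 * softL eps p / xmin p y"
  have lh: "lo < hi" using m L by (simp add: lo_def hi_def divide_strict_right_mono)
  have sw: "softw eps p y j = (if j < p then integral {lo..hi} (\<lambda>c. smx p y c j) / (hi - lo) else 0)" for j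
  proof -
    have "(LBINT c=lo..hi. exp (- c * y j) / (\<Sum>j<p. exp (- c * y j))) = integral {lo..hi} (\<lambda>c. smx p y c j)"
      unfolding smx_def[symmetric]
      using lh smx_props(1)[OF p]
      by (intro interval_integral_eq_integral borel_integrable_atLeastAtMost') (auto intro: continuous_on_subset)
    thus ?thesis unfolding softw_def Let_def lo_def[symmetric] hi_def[symmetric] by simp
  qed
  have "pmf (embed_pmf (softw eps p y)) = softw eps p y"
  proof (rule pmf_embed_finite[of "{..<p}"])
    show "0 \<le> softw eps p y j" for j unfolding sw using lh
      by (auto intro!: divide_nonneg_pos Henstock_Kurzweil_Integration.integral_nonneg
          integrable_continuous_interval continuous_on_subset[OF smx_props(1)[OF p]] smx_props(2)[OF p])
    show "sum (softw eps p y) {..<p} = 1" unfolding sw using lh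
      by (simp add: sum_divide_distrib[symmetric] int_sum1[OF smx_props(1)[OF p] smx_props(3)[OF p]])
  qed (auto simp: sw)
  moreover have "softargmin eps p y = embed_pmf (softw eps p y)" using m by (simp add: softargmin_def)
  ultimately show ?thesis using sw lo_def hi_def by simp
qed

theorem mainTheorem11:
  fixes p :: nat and x x' :: "nat \<Rightarrow> real" and eps \<delta> :: real
  assumes "p \<ge> 1"
    and "\<forall>i<p. x i \<ge> 0"
    and "0 < eps" and "eps \<le> 1"
    and "\<delta> > 0"
    and "\<delta> \<le> xmin p x / (4 * (1 / eps) * ln (2 * real p * (1 / eps)))"
    and "\<forall>i<p. 0 \<le> x' i \<and> x i \<le> x' i \<and> x' i \<le> x i + \<delta>"
  shows "TV (softargmin eps p x) (softargmin eps p x')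
           \<le> 10 * (1 / eps) * ln (2 * real p * (1 / eps)) * \<delta> / xmin p x"
proof -
  note p = assms(1)
  define L where "L = softL eps p"
  have Ldef: "L = (1 / eps) * ln (2 * real p * (1 / eps))" by (simp add: L_def softL_def)
  have ln2: "ln (2 * real p * (1 / eps)) \<ge> ln 2"
  proof -
    have "2 * real p * (1 / eps) \<ge> 2" using assms(1,3,4) by (simp add: field_simps)
    thus ?thesis by simp
  qed
  have L23: "L \<ge> 2/3"
  proof -
    have "1 / eps \<ge> 1" using assms(3,4) by simp
    moreover have "ln (2 * real p * (1 / eps)) \<ge> 2/3" using ln2 ln2_ge_two_thirds by linarith
    ultimately have "(1 / eps) * ln (2 * real p * (1 / eps)) \<ge> 1 * (2/3)"
      using assms(3) by (intro mult_mono) auto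
    thus ?thesis using Ldef by simp
  qed
  have Lp: "L > 0" using L23 by simp
  define m where "m = xmin p x"
  define m' where "m' = xmin p x'"
  have dm: "\<delta> \<le> m / (4 * L)" using assms(6) by (simp add: m_def Ldef mult.assoc)
  have mp: "m > 0"
  proof (rule ccontr)
    assume "\<not> m > 0"
    hence "m / (4 * L) \<le> 0" using Lp by (simp add: divide_nonpos_pos)
    thus False using dm assms(5) by linarith
  qed
  have fin: "finite (x ` {..<p})" "x ` {..<p} \<noteq> {}" "finite (x' ` {..<p})" "x' ` {..<p} \<noteq> {}"
    using p by (auto simp: lessThan_empty_iff)
  obtain j where j: "j < p" "x j = m"
    using Min_in[OF fin(1,2)] unfolding m_def xmin_def by auto
  obtain k where k: "k < p" "x' k = m'"
    using Min_in[OF fin(3,4)] unfolding m'_def xmin_def by auto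
  have mle: "m \<le> x i" if "i < p" for i unfolding m_def xmin_def using fin that by auto
  have mle': "m' \<le> x' i" if "i < p" for i unfolding m'_def xmin_def using fin that by auto
  have mm1: "m \<le> m'" using mle[OF k(1)] k assms(7) by force
  have mm2: "m' \<le> m + \<delta>" using mle'[OF j(1)] j assms(7) by force
  have dm2: "\<delta> \<le> m"
  proof -
    have "m / (4 * L) \<le> m / 1" using mp L23 by (intro divide_left_mono) auto
    thus ?thesis using dm by simp
  qed
  have mm3: "m' \<le> 2 * m" using mm2 dm2 by simp
  have mp': "m' > 0" using mp mm1 by simp
  define lo where "lo = 2 * L / m"
  define hi where "hi = 4 * L / m"
  define lo' where "lo' = 2 * L / m'"
  define hi' where "hi' = 4 * L / m'"
  have ord: "lo' \<le> lo" "lo \<le> hi'" "hi' \<le> hi" "lo < hi" "lo' < hi'"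
  proof -
    show "lo' \<le> lo" unfolding lo_def lo'_def using Lp mp mm1 by (intro divide_left_mono) auto
    show "hi' \<le> hi" unfolding hi_def hi'_def using Lp mp mm1 by (intro divide_left_mono) auto
    show "lo < hi" unfolding lo_def hi_def using Lp mp by (simp add: divide_strict_right_mono)
    show "lo' < hi'" unfolding lo'_def hi'_def using Lp mp' by (simp add: divide_strict_right_mono)
    have "4 * L / m' \<ge> 4 * L / (2 * m)" using Lp mp' mm3 by (intro divide_left_mono) auto
    thus "lo \<le> hi'" unfolding lo_def hi'_def by simp
  qed
  define F where "F = smx p x"
  define G where "G = smx p x'"
  have contF: "\<And>i. continuous_on UNIV (\<lambda>c. F c i)" and contG: "\<And>i. continuous_on UNIV (\<lambda>c. G c i)"
    using smx_props(1)[OF p] by (auto simp: F_def G_def)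
  define f where "f i = integral {lo..hi} (\<lambda>c. F c i) / (hi - lo)" for i
  define g where "g i = integral {lo'..hi'} (\<lambda>c. G c i) / (hi' - lo')" for i
  define r where "r i = integral {lo'..hi'} (\<lambda>c. F c i) / (hi' - lo')" for i
  have pf: "pmf (softargmin eps p x) i = (if i < p then f i else 0)" for i
    using pmf_softargmin[OF p _ ] mp Lp
    by (simp add: f_def F_def m_def L_def lo_def hi_def)
  have pg: "pmf (softargmin eps p x') i = (if i < p then g i else 0)" for i
    using pmf_softargmin[OF p _ ] mp' Lp
    by (simp add: g_def G_def m'_def L_def lo'_def hi'_def)
  have "TV (softargmin eps p x) (softargmin eps p x') \<le> (\<Sum>i<p. \<bar>pmf (softargmin eps p x) i - pmf (softargmin eps p x') i\<bar>) / 2"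
    by (rule TV_le) (auto simp: pf pg)
  also have "(\<Sum>i<p. \<bar>pmf (softargmin eps p x) i - pmf (softargmin eps p x') i\<bar>) = (\<Sum>i<p. \<bar>f i - g i\<bar>)"
    by (simp add: pf pg)
  also have "(\<Sum>i<p. \<bar>f i - g i\<bar>) \<le> (\<Sum>i<p. \<bar>f i - r i\<bar>) + (\<Sum>i<p. \<bar>r i - g i\<bar>)"
    by (subst sum.distrib[symmetric]) (intro sum_mono, linarith)
  also have "(\<Sum>i<p. \<bar>f i - r i\<bar>) \<le> 4 * \<delta> / m"
  proof -
    have "(\<Sum>i<p. \<bar>f i - r i\<bar>) \<le> \<bar>1 / (hi - lo) - 1 / (hi' - lo')\<bar> * (hi' - lo) + (hi - hi') / (hi - lo) + (lo - lo') / (hi' - lo')"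
      unfolding f_def r_def
      by (rule interval_part[OF contF _ _ ord]) (auto simp: F_def smx_props[OF p])
    also have "\<dots> \<le> 4 * \<delta> / m" unfolding lo_def hi_def lo'_def hi'_def
      by (rule arith_part) (use Lp mp mm1 mm2 mm3 in auto)
    finally show ?thesis .
  qed
  also have "(\<Sum>i<p. \<bar>r i - g i\<bar>) \<le> 2 * hi' * \<delta>"
  proof -
    have wp: "hi' - lo' > 0" using ord by simp
    have "(\<Sum>i<p. \<bar>r i - g i\<bar>) = (\<Sum>i<p. \<bar>integral {lo'..hi'} (\<lambda>c. F c i) - integral {lo'..hi'} (\<lambda>c. G c i)\<bar>) / (hi' - lo')"
      unfolding r_def g_def sum_divide_distrib using wp
      by (intro sum.cong) (simp_all add: diff_divide_distrib[symmetric] abs_divide)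
    also have "\<dots> \<le> (2 * hi' * \<delta>) * (hi' - lo') / (hi' - lo')"
    proof (intro divide_right_mono claim2[OF contF contG])
      fix c assume c: "c \<in> {lo'..hi'}"
      have c0: "c \<ge> 0" using c Lp mp' by (auto simp: lo'_def intro: order.trans[rotated])
      have "(\<Sum>i<p. \<bar>F c i - G c i\<bar>) \<le> 2 * c * \<delta>"
        unfolding F_def G_def smx_def using softmax_diff[OF p c0, of x x' \<delta>] assms(7) by auto
      also have "\<dots> \<le> 2 * hi' * \<delta>" using c assms(5) by (auto intro: mult_right_mono)
      finally show "(\<Sum>i<p. \<bar>F c i - G c i\<bar>) \<le> 2 * hi' * \<delta>" .
    qed (use wp in auto)
    also have "\<dots> = 2 * hi' * \<delta>" using wp by simp
    finally show ?thesis .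
  qed
  finally have T: "TV (softargmin eps p x) (softargmin eps p x') \<le> (4 * \<delta> / m + 2 * hi' * \<delta>) / 2" by simp
  have "hi' \<le> 4 * L / m" using ord by (simp add: hi_def)
  hence "2 * hi' * \<delta> \<le> 2 * (4 * L / m) * \<delta>" using assms(5) by (intro mult_right_mono) auto
  moreover have "4 * \<delta> / m \<le> 6 * L * \<delta> / m"
    using L23 mp assms(5) by (intro divide_right_mono mult_right_mono) auto
  ultimately have A: "2 * hi' * \<delta> \<le> 8 * (L * \<delta> / m)" "4 * \<delta> / m \<le> 6 * (L * \<delta> / m)"
    by (simp_all add: field_simps)
  have "L * \<delta> / m \<ge> 0" using Lp mp assms(5) by simp
  hence "(4 * \<delta> / m + 2 * hi' * \<delta>) / 2 \<le> 10 * (L * \<delta> / m)" using A by (rule aux_lin)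
  hence "(4 * \<delta> / m + 2 * hi' * \<delta>) / 2 \<le> 10 * L * \<delta> / m" by simp
  also have "10 * L * \<delta> / m = 10 * (1 / eps) * ln (2 * real p * (1 / eps)) * \<delta> / xmin p x"
    by (simp add: Ldef m_def)
  finally show ?thesis using T by linarith
qed

end
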